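(* For every Tychonoff space $X$, the following are equivalent: (1) $C_p(X)\models S_1(\Gamma_f,\Gamma_f)$ for every $f\in C_p(X)$; (2) $X\models S_1(\Gamma_F,\Gamma)$.
   Context: All spaces are Tychonoff; $C_p(X)$ is $C(X)$ with pointwise convergence topology. For $y$ in a space $Y$: $\Gamma_y=\{A\subseteq Y: A$ infinite, $y\notin A$, every neighbourhood of $y$ contains all but finitely many points of $A\}$. Zero-set: $g^{-1}(0)$, $g\in C(X)$; cozero-set: its complement. A cover $\mathcal U$ of $X$ always means $X=\bigcup\mathcal U$, $X\notin\mathcal U$; $\gamma$-cover: infinite, each point in all but finitely many members. $\Gamma$: open $\gamma$-covers. $\Gamma_F$: $\gamma$-covers $\mathcal U$ of $X$ by cozero-sets for which there are zero-sets $F(U)\subseteq U$ ($U\in\mathcal U$) with $\{F(U):U\in\mathcal U\}$ a $\gamma$-cover of $X$. $S_1(\mathcal A,\mathcal B)$: for every sequence $(A_n)$ from $\mathcal A$ there are $b_n\in A_n$ with $\{b_n:n\in\omega\}\in\mathcal B$. *)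

theory Defs
  imports "HOL-Analysis.Analysis"
begin

definition tychonoff_space :: "'a topology \<Rightarrow> bool" where
  "tychonoff_space X \<longleftrightarrow> completely_regular_space X \<and> Hausdorff_space X"

text \<open>C_p(X): continuous real functions on X (extensional, i.e. undefined outside
  the carrier) with the topology of pointwise convergence, i.e. as a subspace of
  the product topology on real^X.\<close>
definition Cp :: "'a topology \<Rightarrow> ('a \<Rightarrow> real) topology" where
  "Cp X = subtopology (product_topology (\<lambda>_. euclideanreal) (topspace X))
            {f. continuous_map X euclideanreal f \<and> f \<in> extensional (topspace X)}"

definition Gamma_pt :: "'b topology \<Rightarrow> 'b \<Rightarrow> 'b set set" where
  "Gamma_pt Y y = {A. A \<subseteq> topspace Y \<and> infinite A \<and> y \<notin> A \<and>
      (\<forall>U. openin Y U \<and> y \<in> U \<longrightarrow> finite (A - U))}"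

definition S1 :: "'c set set \<Rightarrow> 'c set set \<Rightarrow> bool" where
  "S1 \<A> \<B> \<longleftrightarrow> (\<forall>A :: nat \<Rightarrow> 'c set. (\<forall>n. A n \<in> \<A>) \<longrightarrow>
      (\<exists>b. (\<forall>n. b n \<in> A n) \<and> range b \<in> \<B>))"

definition zero_set :: "'a topology \<Rightarrow> 'a set \<Rightarrow> bool" where
  "zero_set X Z \<longleftrightarrow> (\<exists>g. continuous_map X euclideanreal g \<and> Z = {x \<in> topspace X. g x = 0})"

definition cozero_set :: "'a topology \<Rightarrow> 'a set \<Rightarrow> bool" where
  "cozero_set X U \<longleftrightarrow> (\<exists>g. continuous_map X euclideanreal g \<and> U = {x \<in> topspace X. g x \<noteq> 0})"

definition is_cover :: "'a topology \<Rightarrow> 'a set set \<Rightarrow> bool" where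
  "is_cover X \<U> \<longleftrightarrow> \<Union>\<U> = topspace X \<and> topspace X \<notin> \<U>"

definition gamma_cover :: "'a topology \<Rightarrow> 'a set set \<Rightarrow> bool" where
  "gamma_cover X \<U> \<longleftrightarrow> is_cover X \<U> \<and> infinite \<U> \<and>
      (\<forall>x \<in> topspace X. finite {U \<in> \<U>. x \<notin> U})"

definition Gamma_open :: "'a topology \<Rightarrow> 'a set set set" where
  "Gamma_open X = {\<U>. gamma_cover X \<U> \<and> (\<forall>U \<in> \<U>. openin X U)}"

definition Gamma_F :: "'a topology \<Rightarrow> 'a set set set" where
  "Gamma_F X = {\<U>. gamma_cover X \<U> \<and> (\<forall>U \<in> \<U>. cozero_set X U) \<and>
      (\<exists>F. (\<forall>U \<in> \<U>. zero_set X (F U) \<and> F U \<subseteq> U) \<and> gamma_cover X (F ` \<U>))}"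

end

theory Submission
  imports Defs
begin


lemma topspace_Cp:
  "topspace (Cp X) = {f. continuous_map X euclideanreal f \<and> f \<in> extensional (topspace X)}"
  unfolding Cp_def by (auto simp: topspace_product_topology PiE_iff extensional_def)

lemma Cp_proj_cont:
  assumes "x \<in> topspace X"
  shows "continuous_map (Cp X) euclideanreal (\<lambda>h. h x)"
  unfolding Cp_def
  by (rule continuous_map_from_subtopology) (use continuous_map_product_projection[OF assms, of "\<lambda>_. euclideanreal"] in simp)

lemma Cp_open_pt:
  assumes "x \<in> topspace X" "open T"
  shows "openin (Cp X) {h \<in> topspace (Cp X). h x \<in> T}"
  using openin_continuous_map_preimage[OF Cp_proj_cont[OF assms(1)], of T] assms(2) by simp

lemma Cp_limitin:
  assumes "f \<in> topspace (Cp X)" "eventually (\<lambda>a. s a \<in> topspace (Cp X)) F"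
    "\<forall>x\<in>topspace X. ((\<lambda>a. s a x) \<longlongrightarrow> f x) F"
  shows "limitin (Cp X) s f F"
proof -
  have tp: "topspace (Cp X) \<subseteq> topspace (product_topology (\<lambda>_. euclideanreal) (topspace X))"
    unfolding Cp_def by simp
  have e: "f \<in> extensional (topspace X)" using assms(1) by (simp add: topspace_Cp)
  have "limitin (product_topology (\<lambda>_. euclideanreal) (topspace X)) s f F"
    unfolding limitin_componentwise
    using e assms(3) tp eventually_mono[OF assms(2), of "\<lambda>a. s a \<in> topspace (product_topology (\<lambda>_. euclideanreal) (topspace X))"]
    by auto
  then show ?thesis
    unfolding Cp_def limitin_subtopology using assms(1,2) by (simp add: topspace_Cp)
qed

lemma Cp_Hausdorff: "Hausdorff_space (Cp X)"
  unfolding Cp_def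
  by (rule Hausdorff_space_subtopology) (simp add: Hausdorff_space_product_topology)




lemma GP1:
  assumes "A \<in> Gamma_pt (Cp X) f" "x \<in> topspace X" "\<epsilon> > 0" "f \<in> topspace (Cp X)"
  shows "finite {h\<in>A. \<epsilon> \<le> \<bar>h x - f x\<bar>}"
proof -
  let ?N = "{h \<in> topspace (Cp X). h x \<in> ball (f x) \<epsilon>}"
  have o: "openin (Cp X) ?N" by (rule Cp_open_pt[OF assms(2)]) simp
  have fin: "f \<in> topspace (Cp X)" by fact
  have "f \<in> ?N" using fin assms(3) by simp
  then have "finite (A - ?N)" using assms(1) o by (auto simp: Gamma_pt_def)
  then show ?thesis
    by (rule finite_subset[rotated]) (auto simp: dist_real_def)
qed

lemma GP2:
  assumes "A \<subseteq> topspace (Cp X)" "infinite A" "f \<notin> A" "f \<in> topspace (Cp X)"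
    "\<forall>x\<in>topspace X. \<forall>\<epsilon>>0. finite {h\<in>A. \<epsilon> \<le> \<bar>h x - f x\<bar>}"
  shows "A \<in> Gamma_pt (Cp X) f"
proof -
  let ?F = "inf cofinite (principal A)"
  have lim: "limitin (Cp X) id f ?F"
  proof (rule Cp_limitin[OF assms(4)])
    show "\<forall>\<^sub>F a in ?F. id a \<in> topspace (Cp X)"
      using assms(1) by (auto simp: eventually_inf_principal intro!: always_eventually)
    show "\<forall>x\<in>topspace X. ((\<lambda>a. id a x) \<longlongrightarrow> f x) ?F"
    proof (intro ballI tendstoI)
      fix x e assume x: "x \<in> topspace X" and e: "(0::real) < e"
      have "finite {h\<in>A. e \<le> \<bar>h x - f x\<bar>}" using assms(5) x e by auto
      then show "\<forall>\<^sub>F a in ?F. dist (id a x) (f x) < e"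
        unfolding eventually_inf_principal eventually_cofinite
        by (rule finite_subset[rotated]) (auto simp: dist_real_def)
    qed
  qed
  have "finite (A - U)" if "openin (Cp X) U" "f \<in> U" for U
  proof -
    have "\<forall>\<^sub>F a in ?F. id a \<in> U" using lim that by (simp add: limitin_def)
    then show ?thesis
      unfolding eventually_inf_principal eventually_cofinite
      by (rule finite_subset[rotated]) auto
  qed
  then show ?thesis using assms by (auto simp: Gamma_pt_def)
qed

lemma KL:
  assumes "f \<in> topspace (Cp X)" "\<And>i. b i \<in> topspace (Cp X)" "\<And>i. b i \<noteq> f"
    "\<forall>x\<in>topspace X. ((\<lambda>i. b i x) \<longlongrightarrow> f x) sequentially"
  shows "range b \<in> Gamma_pt (Cp X) f"
proof -
  have lim: "limitin (Cp X) b f sequentially"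
    by (rule Cp_limitin) (use assms in auto)
  have fin: "finite (range b - U)" if "openin (Cp X) U" "f \<in> U" for U
  proof -
    have "\<forall>\<^sub>F i in sequentially. b i \<in> U" using lim that by (simp add: limitin_def)
    then obtain N where N: "\<And>i. i \<ge> N \<Longrightarrow> b i \<in> U" by (auto simp: eventually_sequentially)
    have "range b - U \<subseteq> b ` {..<N}"
    proof
      fix y assume "y \<in> range b - U"
      then obtain i where "y = b i" "b i \<notin> U" by auto
      then have "i < N" using N not_le by blast
      then show "y \<in> b ` {..<N}" using \<open>y = b i\<close> by auto
    qed
    then show ?thesis by (rule finite_subset) auto
  qed
  have inf: "infinite (range b)"
  proof
    assume "finite (range b)"
    then have "closedin (Cp X) (range b)"
      using Cp_Hausdorff[of X] Hausdorff_imp_t1_space t1_space_closedin_finite assms(2) by blast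
    then have o: "openin (Cp X) (topspace (Cp X) - range b)" by auto
    have fm: "f \<in> topspace (Cp X) - range b" using assms(1,3) by auto
    have "\<forall>\<^sub>F i in sequentially. b i \<in> topspace (Cp X) - range b"
      using lim o fm unfolding limitin_def by blast
    then show False by (simp add: eventually_sequentially)
  qed
  have "range b \<subseteq> topspace (Cp X)" "f \<notin> range b" using assms(2,3) by auto
  then show ?thesis using fin inf unfolding Gamma_pt_def by blast
qed




lemma coz_lt:
  assumes "continuous_map X euclideanreal u"
  shows "cozero_set X {x\<in>topspace X. u x < c}"
  unfolding cozero_set_def
proof (intro exI conjI)
  show "continuous_map X euclideanreal (\<lambda>x. (c - u x) + \<bar>c - u x\<bar>)"
    using assms by (intro continuous_intros) auto
  show "{x \<in> topspace X. u x < c} = {x \<in> topspace X. (c - u x) + \<bar>c - u x\<bar> \<noteq> 0}"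
    by (auto simp: abs_if)
qed

lemma zer_le:
  assumes "continuous_map X euclideanreal u"
  shows "zero_set X {x\<in>topspace X. u x \<le> c}"
  unfolding zero_set_def
proof (intro exI conjI)
  show "continuous_map X euclideanreal (\<lambda>x. (u x - c) + \<bar>u x - c\<bar>)"
    using assms by (intro continuous_intros) auto
  show "{x \<in> topspace X. u x \<le> c} = {x \<in> topspace X. (u x - c) + \<bar>u x - c\<bar> = 0}"
    by (auto simp: abs_if)
qed

lemma coz_Int:
  assumes "cozero_set X A" "cozero_set X B"
  shows "cozero_set X (A \<inter> B)"
proof -
  obtain g h where g: "continuous_map X euclideanreal g" "A = {x \<in> topspace X. g x \<noteq> 0}"
    and h: "continuous_map X euclideanreal h" "B = {x \<in> topspace X. h x \<noteq> 0}"
    using assms by (auto simp: cozero_set_def)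
  show ?thesis unfolding cozero_set_def
    by (rule exI[of _ "\<lambda>x. g x * h x"]) (use g h in \<open>auto intro: continuous_intros\<close>)
qed

lemma zer_Int:
  assumes "zero_set X A" "zero_set X B"
  shows "zero_set X (A \<inter> B)"
proof -
  obtain g h where g: "continuous_map X euclideanreal g" "A = {x \<in> topspace X. g x = 0}"
    and h: "continuous_map X euclideanreal h" "B = {x \<in> topspace X. h x = 0}"
    using assms by (auto simp: zero_set_def)
  have "A \<inter> B = {x \<in> topspace X. \<bar>g x\<bar> + \<bar>h x\<bar> = 0}" using g h by auto
  then show ?thesis unfolding zero_set_def
    by (intro exI[of _ "\<lambda>x. \<bar>g x\<bar> + \<bar>h x\<bar>"] conjI) (use g h in \<open>auto intro: continuous_intros\<close>)
qed

lemma cozero_open: "cozero_set X U \<Longrightarrow> openin X U"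
  unfolding cozero_set_def
  using openin_continuous_map_preimage[of X euclideanreal _ "-{0}"] by (auto simp: open_Compl)

lemma cozero_sub: "cozero_set X U \<Longrightarrow> U \<subseteq> topspace X"
  unfolding cozero_set_def by auto

lemma zero_sub: "zero_set X U \<Longrightarrow> U \<subseteq> topspace X"
  unfolding zero_set_def by auto




lemma HELP1:
  assumes "\<U> \<in> Gamma_F X"
  obtains u :: "nat \<Rightarrow> 'a set" and \<phi> :: "nat \<Rightarrow> 'a \<Rightarrow> real" where
    "\<And>k. u k \<in> \<U>" "\<And>k. \<phi> k \<in> topspace (Cp X)"
    "\<And>k x. x \<in> topspace X \<Longrightarrow> (\<phi> k x < 1 \<longleftrightarrow> x \<in> u k)"
    "inj \<phi>" "\<And>x. x \<in> topspace X \<Longrightarrow> finite {k. 0 < \<phi> k x}"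
    "\<And>k x. x \<in> topspace X \<Longrightarrow> 0 \<le> \<phi> k x"
proof -
  from assms obtain F where gU: "gamma_cover X \<U>" and coz: "\<forall>U\<in>\<U>. cozero_set X U"
    and Fz: "\<forall>U\<in>\<U>. zero_set X (F U) \<and> F U \<subseteq> U" and gF: "gamma_cover X (F ` \<U>)"
    by (auto simp: Gamma_F_def)
  have "infinite (F ` \<U>)" using gF by (simp add: gamma_cover_def)
  then obtain z :: "nat \<Rightarrow> 'a set" where z: "inj z" "range z \<subseteq> F ` \<U>"
    using infinite_countable_subset by blast
  define u where "u k = (SOME U. U \<in> \<U> \<and> F U = z k)" for k
  have u: "u k \<in> \<U> \<and> F (u k) = z k" for k
  proof -
    have "z k \<in> F ` \<U>" using z(2) by auto
    then have "\<exists>U. U \<in> \<U> \<and> F U = z k" by (metis imageE)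
    then show ?thesis unfolding u_def by (rule someI_ex)
  qed
  have "\<forall>k. \<exists>h. continuous_map X euclideanreal h \<and> u k = {x \<in> topspace X. h x \<noteq> 0}"
    using u coz by (auto simp: cozero_set_def)
  then obtain h where h: "\<And>k. continuous_map X euclideanreal (h k)" "\<And>k. u k = {x \<in> topspace X. h k x \<noteq> 0}"
    by metis
  have "\<forall>k. \<exists>g. continuous_map X euclideanreal g \<and> z k = {x \<in> topspace X. g x = 0}"
    using u Fz by (metis zero_set_def)
  then obtain g where g: "\<And>k. continuous_map X euclideanreal (g k)" "\<And>k. z k = {x \<in> topspace X. g k x = 0}"
    by metis
  have zu: "z k \<subseteq> u k" for k using u Fz by metis
  have dpos: "0 < \<bar>g k x\<bar> + \<bar>h k x\<bar>" if "x \<in> topspace X" for k x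
  proof (cases "g k x = 0")
    case True
    then have "x \<in> u k" using zu g(2) that by blast
    then show ?thesis using h(2) by auto
  qed auto
  define \<phi> where "\<phi> k = restrict (\<lambda>x. \<bar>g k x\<bar> / (\<bar>g k x\<bar> + \<bar>h k x\<bar>)) (topspace X)" for k
  have \<phi>x: "\<phi> k x = \<bar>g k x\<bar> / (\<bar>g k x\<bar> + \<bar>h k x\<bar>)" if "x \<in> topspace X" for k x
    using that by (simp add: \<phi>_def)
  have P2: "\<phi> k \<in> topspace (Cp X)" for k
  proof -
    have "continuous_map X euclideanreal (\<lambda>x. \<bar>g k x\<bar> / (\<bar>g k x\<bar> + \<bar>h k x\<bar>))"
      by (intro continuous_intros g(1) h(1)) (metis dpos order_less_irrefl)
    then have "continuous_map X euclideanreal (\<phi> k)"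
      by (rule continuous_map_eq) (simp add: \<phi>x)
    then show ?thesis by (simp add: topspace_Cp \<phi>_def)
  qed
  have P3: "\<phi> k x < 1 \<longleftrightarrow> x \<in> u k" if "x \<in> topspace X" for k x
    using dpos[OF that, of k] that by (simp add: \<phi>x h(2) divide_less_eq_1)
  have P4: "inj \<phi>"
  proof
    fix k k' assume "\<phi> k = \<phi> k'"
    then have "u k = u k'"
    proof -
      assume e: "\<phi> k = \<phi> k'"
      have "x \<in> u k \<longleftrightarrow> x \<in> u k'" for x
      proof (cases "x \<in> topspace X")
        case True
        then show ?thesis using P3[OF True, of k] P3[OF True, of k'] e by simp
      next
        case False
        then show ?thesis using h(2) by blast
      qed
      then show ?thesis by blast
    qed
    then have "z k = z k'" using u by metis
    then show "k = k'" using z(1) by (simp add: inj_eq)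
  qed
  have P5: "finite {k. 0 < \<phi> k x}" if x: "x \<in> topspace X" for x
  proof -
    have "finite {T \<in> F ` \<U>. x \<notin> T}" using gF x by (simp add: gamma_cover_def)
    then have "finite (z -` {T \<in> F ` \<U>. x \<notin> T})" using z(1) by (rule finite_vimageI)
    moreover have "{k. 0 < \<phi> k x} \<subseteq> z -` {T \<in> F ` \<U>. x \<notin> T}"
    proof
      fix k assume "k \<in> {k. 0 < \<phi> k x}"
      then have "g k x \<noteq> 0" using x by (auto simp: \<phi>x)
      then have "x \<notin> z k" using g(2) by blast
      moreover have "z k \<in> F ` \<U>" using z(2) by blast
      ultimately show "k \<in> z -` {T \<in> F ` \<U>. x \<notin> T}" by blast
    qed
    ultimately show ?thesis by (rule finite_subset[rotated])
  qed
  have P6: "0 \<le> \<phi> k x" if "x \<in> topspace X" for k x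
    using that by (simp add: \<phi>x)
  show ?thesis
  proof (rule that[of u \<phi>])
    show "\<And>k. u k \<in> \<U>" using u by blast
  qed (fact P2 P3 P4 P5 P6)+
qed




lemma dir12:
  assumes H: "\<forall>f \<in> topspace (Cp X). S1 (Gamma_pt (Cp X) f) (Gamma_pt (Cp X) f)"
  shows "S1 (Gamma_F X) (Gamma_open X)"
  unfolding S1_def
proof (intro allI impI)
  fix \<U> :: "nat \<Rightarrow> 'a set set" assume UF: "\<forall>n. \<U> n \<in> Gamma_F X"
  define f0 :: "'a \<Rightarrow> real" where "f0 = restrict (\<lambda>_. 0) (topspace X)"
  have f0: "f0 \<in> topspace (Cp X)" by (simp add: topspace_Cp f0_def)
  define Q where "Q n p \<longleftrightarrow> (\<forall>k. fst p k \<in> \<U> n) \<and> (\<forall>k. snd p k \<in> topspace (Cp X)) \<and>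
    (\<forall>k x. x \<in> topspace X \<longrightarrow> (snd p k x < 1 \<longleftrightarrow> x \<in> fst p k)) \<and>
    inj (snd p) \<and> (\<forall>x. x \<in> topspace X \<longrightarrow> finite {k. 0 < snd p k x}) \<and>
    (\<forall>k x. x \<in> topspace X \<longrightarrow> 0 \<le> snd p k x)"
    for n and p :: "(nat \<Rightarrow> 'a set) \<times> (nat \<Rightarrow> 'a \<Rightarrow> real)"
  have ex: "\<exists>p. Q n p" for n
    apply (rule HELP1[OF UF[rule_format, of n]])
    subgoal for u \<phi> unfolding Q_def by (rule exI[where x="(u, \<phi>)"], intro conjI allI impI; simp)
    done
  define u where "u n = fst (SOME p. Q n p)" for n
  define \<phi> where "\<phi> n = snd (SOME p. Q n p)" for n
  have Qn: "Q n (u n, \<phi> n)" for n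
    unfolding u_def \<phi>_def using someI_ex[OF ex[of n]] by simp
  have u: "\<And>n k. u n k \<in> \<U> n" and \<phi>t: "\<And>n k. \<phi> n k \<in> topspace (Cp X)"
    and \<phi>u: "\<And>n k x. x \<in> topspace X \<Longrightarrow> (\<phi> n k x < 1 \<longleftrightarrow> x \<in> u n k)"
    and \<phi>i: "\<And>n. inj (\<phi> n)" and \<phi>f: "\<And>n x. x \<in> topspace X \<Longrightarrow> finite {k. 0 < \<phi> n k x}"
    and \<phi>p: "\<And>n k x. x \<in> topspace X \<Longrightarrow> 0 \<le> \<phi> n k x"
    using Qn unfolding Q_def by simp_all
  have UX: "u n k \<subseteq> topspace X" for n k
    using u[of n k] UF cozero_sub unfolding Gamma_F_def by blast
  have XnU: "topspace X \<notin> \<U> n" for n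
    using UF unfolding Gamma_F_def gamma_cover_def is_cover_def by blast
  have A: "range (\<phi> n) \<in> Gamma_pt (Cp X) f0" for n
  proof (rule GP2[OF _ _ _ f0])
    show "range (\<phi> n) \<subseteq> topspace (Cp X)" using \<phi>t by blast
    show "infinite (range (\<phi> n))" using \<phi>i[of n] by (simp add: infinite_UNIV_char_0 finite_image_iff)
    show "f0 \<notin> range (\<phi> n)"
    proof
      assume "f0 \<in> range (\<phi> n)"
      then obtain k where k: "\<phi> n k = f0" by auto
      have "topspace X \<subseteq> u n k"
      proof
        fix x assume x: "x \<in> topspace X"
        then have "\<phi> n k x < 1" using k by (simp add: f0_def)
        then show "x \<in> u n k" using \<phi>u[OF x] by blast
      qed
      then have "u n k = topspace X" using UX by blast
      then show False using u[of n k] XnU by metis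
    qed
    show "\<forall>x\<in>topspace X. \<forall>\<epsilon>>0. finite {h \<in> range (\<phi> n). \<epsilon> \<le> \<bar>h x - f0 x\<bar>}"
    proof (intro ballI allI impI)
      fix x and e :: real assume x: "x \<in> topspace X" and e: "e > 0"
      have "{h \<in> range (\<phi> n). e \<le> \<bar>h x - f0 x\<bar>} \<subseteq> \<phi> n ` {k. 0 < \<phi> n k x}"
      proof
        fix h assume "h \<in> {h \<in> range (\<phi> n). e \<le> \<bar>h x - f0 x\<bar>}"
        then obtain k where k: "h = \<phi> n k" "e \<le> \<bar>\<phi> n k x\<bar>" using x by (auto simp: f0_def)
        then have "0 < \<phi> n k x" using e \<phi>p[OF x, of n k] by simp
        then show "h \<in> \<phi> n ` {k. 0 < \<phi> n k x}" using k by blast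
      qed
      then show "finite {h \<in> range (\<phi> n). e \<le> \<bar>h x - f0 x\<bar>}"
        using \<phi>f[OF x, of n] finite_subset by blast
    qed
  qed
  have "\<exists>b. (\<forall>n. b n \<in> range (\<phi> n)) \<and> range b \<in> Gamma_pt (Cp X) f0"
    using H[rule_format, OF f0] A unfolding S1_def by simp
  then obtain b where b: "\<And>n. b n \<in> range (\<phi> n)" and rb: "range b \<in> Gamma_pt (Cp X) f0"
    by blast
  have "\<forall>n. \<exists>k. b n = \<phi> n k" using b by blast
  then obtain kk where kk: "\<And>n. b n = \<phi> n (kk n)" by metis
  define sel where "sel n = u n (kk n)" for n
  define \<Psi> where "\<Psi> h = {y \<in> topspace X. h y < (1::real)}" for h :: "'a \<Rightarrow> real"
  have \<Psi>b: "\<Psi> (b n) = sel n" for n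
    using \<phi>u UX unfolding \<Psi>_def sel_def kk by blast
  have rs: "range sel = \<Psi> ` range b" using \<Psi>b by (auto simp: image_iff)
  define N where "N x = {h \<in> topspace (Cp X). h x \<in> {..<(1::real)}}" for x
  have No: "openin (Cp X) (N x)" "f0 \<in> N x" if "x \<in> topspace X" for x
    using Cp_open_pt[OF that, of "{..<1}"] f0 that by (auto simp: N_def f0_def)
  have finN: "finite (range b - N x)" if "x \<in> topspace X" for x
    using rb No[OF that] unfolding Gamma_pt_def by blast
  have bt: "b n \<in> topspace (Cp X)" for n using kk \<phi>t by simp
  have miss: "{V \<in> range sel. x \<notin> V} \<subseteq> \<Psi> ` (range b - N x)" if x: "x \<in> topspace X" for x
  proof
    fix V assume "V \<in> {V \<in> range sel. x \<notin> V}"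
    then obtain n where V: "V = sel n" "x \<notin> sel n" by auto
    then have "b n \<notin> N x" using x unfolding \<Psi>b[symmetric] \<Psi>_def N_def by auto
    then show "V \<in> \<Psi> ` (range b - N x)" using V \<Psi>b by auto
  qed
  have finmiss: "finite {V \<in> range sel. x \<notin> V}" if x: "x \<in> topspace X" for x
    using finite_subset[OF miss[OF x]] finN[OF x] by blast
  have infsel: "infinite (range sel)"
  proof
    assume fin: "finite (range sel)"
    have "infinite (range b)" using rb by (simp add: Gamma_pt_def)
    moreover have "finite (\<Psi> ` range b)" using fin rs by simp
    ultimately obtain V where V: "V \<in> \<Psi> ` range b" "infinite (\<Psi> -` {V} \<inter> range b)"
      using inf_img_fin_dom' by blast
    then obtain n where Vn: "V = sel n" using \<Psi>b by auto
    have "V \<noteq> topspace X" using Vn u XnU unfolding sel_def by metis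
    then obtain x where x: "x \<in> topspace X" "x \<notin> V" using UX Vn sel_def by blast
    have "\<Psi> -` {V} \<inter> range b \<subseteq> range b - N x"
      using x unfolding \<Psi>_def N_def by auto
    then show False using V(2) finN[OF x(1)] finite_subset by blast
  qed
  show "\<exists>b. (\<forall>n. b n \<in> \<U> n) \<and> range b \<in> Gamma_open X"
  proof (intro exI conjI allI)
    show "sel n \<in> \<U> n" for n using u sel_def by simp
    have op: "\<forall>V\<in>range sel. openin X V"
      using u UF cozero_open unfolding sel_def Gamma_F_def by blast
    have cov: "\<Union>(range sel) = topspace X"
    proof
      show "\<Union>(range sel) \<subseteq> topspace X" using UX sel_def by auto
      show "topspace X \<subseteq> \<Union>(range sel)"
      proof
        fix x assume x: "x \<in> topspace X"
        have "range sel - {V \<in> range sel. x \<notin> V} \<noteq> {}"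
          using infsel finmiss[OF x] by (metis finite_Diff2 finite.emptyI Diff_empty Diff_eq_empty_iff infinite_super)
        then show "x \<in> \<Union>(range sel)" by blast
      qed
    qed
    have "topspace X \<notin> range sel" using u XnU sel_def by (metis rangeE)
    then show "range sel \<in> Gamma_open X"
      using op cov infsel finmiss unfolding Gamma_open_def gamma_cover_def is_cover_def by blast
  qed
qed




lemma TL:
  fixes s :: "nat \<Rightarrow> real"
  assumes "eventually (\<lambda>i. \<bar>s i - l\<bar> < 1 / (real i + 1)) sequentially"
  shows "(s \<longlongrightarrow> l) sequentially"
proof (rule tendstoI)
  fix e :: real assume e: "e > 0"
  have "eventually (\<lambda>i. inverse (real (Suc i)) < e) sequentially"
    using order_tendstoD(2)[OF LIMSEQ_inverse_real_of_nat e] .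
  then show "eventually (\<lambda>i. dist (s i) l < e) sequentially"
    using assms by eventually_elim (simp add: dist_real_def inverse_eq_divide add.commute)
qed

lemma COV:
  fixes W Z :: "nat \<Rightarrow> 'a set"
  assumes coz: "\<And>k. cozero_set X (W k)" and zer: "\<And>k. zero_set X (Z k)"
    and ZW: "\<And>k. Z k \<subseteq> W k"
    and fin: "\<And>x. x \<in> topspace X \<Longrightarrow> finite {k. x \<notin> Z k}"
    and L: "infinite L" and LX: "\<And>k. k \<in> L \<Longrightarrow> W k \<noteq> topspace X"
  shows "W ` L \<in> Gamma_F X"
proof -
  let ?C = "W ` L"
  have WX: "W k \<subseteq> topspace X" for k using coz cozero_sub by blast
  have finW: "finite {k. x \<notin> W k}" if "x \<in> topspace X" for x
  proof -
    have "{k. x \<notin> W k} \<subseteq> {k. x \<notin> Z k}" using ZW by blast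
    then show ?thesis using finite_subset[OF _ fin[OF that]] by blast
  qed
  have XC: "topspace X \<notin> ?C" using LX by auto
  have miss: "finite {C \<in> ?C. x \<notin> C}" if "x \<in> topspace X" for x
  proof -
    have "{C \<in> ?C. x \<notin> C} \<subseteq> W ` {k. x \<notin> W k}" by auto
    then show ?thesis by (rule finite_subset) (rule finite_imageI, rule finW[OF that])
  qed
  have infC: "infinite ?C"
  proof
    assume fC: "finite ?C"
    obtain C where C: "C \<in> ?C" "infinite (W -` {C} \<inter> L)"
      using inf_img_fin_dom'[OF fC L] by blast
    have "topspace X \<subseteq> C"
    proof
      fix x assume x: "x \<in> topspace X"
      show "x \<in> C"
      proof (rule ccontr)
        assume "x \<notin> C"
        then have "W -` {C} \<inter> L \<subseteq> {k. x \<notin> W k}" by auto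
        then show False using C(2) finite_subset[OF _ finW[OF x]] by blast
      qed
    qed
    then show False using C(1) WX LX by blast
  qed
  have cov: "\<Union>?C = topspace X"
  proof
    show "\<Union>?C \<subseteq> topspace X" using WX by blast
    show "topspace X \<subseteq> \<Union>?C"
    proof
      fix x assume x: "x \<in> topspace X"
      have "L - {k. x \<notin> Z k} \<noteq> {}" using L fin[OF x] by (metis Diff_eq_empty_iff finite_subset)
      then obtain k where "k \<in> L" "x \<in> Z k" by blast
      then show "x \<in> \<Union>?C" using ZW by blast
    qed
  qed
  have gC: "gamma_cover X ?C"
    unfolding gamma_cover_def is_cover_def using cov XC infC miss by blast
  define \<kappa> where "\<kappa> C = (LEAST k. k \<in> L \<and> W k = C)" for C
  have \<kappa>: "\<kappa> C \<in> L \<and> W (\<kappa> C) = C" if "C \<in> ?C" for C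
  proof -
    from that obtain k where "k \<in> L \<and> W k = C" by blast
    then show ?thesis unfolding \<kappa>_def by (rule LeastI)
  qed
  define F where "F C = Z (\<kappa> C)" for C
  have FC: "F C \<subseteq> C" if "C \<in> ?C" for C
  proof -
    have "W (\<kappa> C) = C" using \<kappa>[OF that] by blast
    then show ?thesis unfolding F_def using ZW[of "\<kappa> C"] by simp
  qed
  have Fz: "zero_set X (F C)" for C using zer F_def by simp
  have injk: "inj_on \<kappa> ?C"
  proof (rule inj_onI)
    fix C C' assume a: "C \<in> ?C" "C' \<in> ?C" "\<kappa> C = \<kappa> C'"
    have "C = W (\<kappa> C)" using \<kappa>[OF a(1)] by simp
    also have "\<dots> = W (\<kappa> C')" using a(3) by simp
    also have "\<dots> = C'" using \<kappa>[OF a(2)] by simp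
    finally show "C = C'" .
  qed
  have Fmiss: "finite {T \<in> F ` ?C. x \<notin> T}" if "x \<in> topspace X" for x
  proof -
    have "{T \<in> F ` ?C. x \<notin> T} \<subseteq> Z ` {k. x \<notin> Z k}" unfolding F_def by blast
    then show ?thesis by (rule finite_subset) (rule finite_imageI, rule fin[OF that])
  qed
  have XF: "topspace X \<notin> F ` ?C"
  proof
    assume "topspace X \<in> F ` ?C"
    then obtain C where C: "C \<in> ?C" "F C = topspace X" by blast
    then obtain k where k: "C = W k" by blast
    have "topspace X \<subseteq> C" using FC[OF C(1)] C(2) by simp
    then have "C = topspace X" using WX[of k] k by blast
    then show False using C(1) XC by simp
  qed
  have infF: "infinite (F ` ?C)"
  proof
    assume fF: "finite (F ` ?C)"
    obtain T where T: "T \<in> F ` ?C" "infinite (F -` {T} \<inter> ?C)"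
      using inf_img_fin_dom'[OF fF infC] by blast
    have "topspace X \<subseteq> T"
    proof
      fix x assume x: "x \<in> topspace X"
      show "x \<in> T"
      proof (rule ccontr)
        assume "x \<notin> T"
        have "F -` {T} \<inter> ?C \<subseteq> W ` {k. x \<notin> Z k}"
        proof
          fix C assume "C \<in> F -` {T} \<inter> ?C"
          then have "C \<in> ?C" "F C = T" by auto
          then show "C \<in> W ` {k. x \<notin> Z k}"
            using \<kappa>[OF \<open>C \<in> ?C\<close>] \<open>x \<notin> T\<close> unfolding F_def by (metis image_eqI mem_Collect_eq)
        qed
        then show False using T(2) finite_subset[OF _ finite_imageI[OF fin[OF x]]] by blast
      qed
    qed
    moreover have "T \<subseteq> topspace X" using T(1) Fz zero_sub by blast
    ultimately have "T = topspace X" by blast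
    then show False using T(1) XF by simp
  qed
  have covF: "\<Union>(F ` ?C) = topspace X"
  proof
    show "\<Union>(F ` ?C) \<subseteq> topspace X" using Fz zero_sub by blast
    show "topspace X \<subseteq> \<Union>(F ` ?C)"
    proof
      fix x assume x: "x \<in> topspace X"
      have "infinite (\<kappa> ` ?C)" using infC injk finite_image_iff by blast
      then have "\<kappa> ` ?C - {k. x \<notin> Z k} \<noteq> {}" using fin[OF x] by (metis Diff_eq_empty_iff finite_subset)
      then obtain C where "C \<in> ?C" "x \<in> Z (\<kappa> C)" by blast
      then show "x \<in> \<Union>(F ` ?C)" unfolding F_def by blast
    qed
  qed
  have gF: "gamma_cover X (F ` ?C)"
    unfolding gamma_cover_def is_cover_def using covF XF infF Fmiss by blast
  show ?thesis unfolding Gamma_F_def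
    using gC coz gF FC Fz by blast
qed




lemma dir21:
  assumes H: "S1 (Gamma_F X) (Gamma_open X)" and f: "f \<in> topspace (Cp X)"
  shows "S1 (Gamma_pt (Cp X) f) (Gamma_pt (Cp X) f)"
  unfolding S1_def
proof (intro allI impI)
  fix A :: "nat \<Rightarrow> ('a \<Rightarrow> real) set" assume A: "\<forall>n. A n \<in> Gamma_pt (Cp X) f"
  have Ainf: "infinite (A i)" and Asub: "A i \<subseteq> topspace (Cp X)" and fA: "f \<notin> A i" for i
    using A by (auto simp: Gamma_pt_def)
  have exg: "\<exists>s :: nat \<Rightarrow> 'a \<Rightarrow> real. inj s \<and> range s \<subseteq> A i" for i
    using infinite_countable_subset[OF Ainf[of i]] by blast
  define g where "g i = (SOME s :: nat \<Rightarrow> 'a \<Rightarrow> real. inj s \<and> range s \<subseteq> A i)" for i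
  have g: "inj (g i) \<and> range (g i) \<subseteq> A i" for i
    unfolding g_def by (rule someI_ex[OF exg])
  have gA: "g i k \<in> A i" for i k using g[of i] by blast
  have gt: "g i k \<in> topspace (Cp X)" for i k using gA Asub by blast
  have gc: "continuous_map X euclideanreal (g i k)" for i k using gt[of i k] by (simp add: topspace_Cp)
  have fc: "continuous_map X euclideanreal f" using f by (simp add: topspace_Cp)
  define d where "d i k x = \<bar>g i k x - f x\<bar>" for i k x
  have dc: "continuous_map X euclideanreal (d i k)" for i k
    unfolding d_def by (intro continuous_intros gc fc)
  have dfin: "finite {k. e \<le> d i k x}" if "x \<in> topspace X" "e > 0" for i x e
  proof -
    have "finite {h \<in> A i. e \<le> \<bar>h x - f x\<bar>}" using GP1[OF A[rule_format, of i] that f] .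
    then have "finite (g i -` {h \<in> A i. e \<le> \<bar>h x - f x\<bar>})"
      using g[of i] by (intro finite_vimageI) auto
    moreover have "{k. e \<le> d i k x} \<subseteq> g i -` {h \<in> A i. e \<le> \<bar>h x - f x\<bar>}"
      using gA unfolding d_def by blast
    ultimately show ?thesis by (rule finite_subset[rotated])
  qed
  define W where "W m k = {x \<in> topspace X. \<forall>i\<le>m. d i k x < 1 / (real i + 1)}" for m k
  define Z where "Z m k = {x \<in> topspace X. \<forall>i\<le>m. d i k x \<le> 1 / (2 * (real i + 1))}" for m k
  have Wc: "cozero_set X (W m k)" for m k
  proof (induction m)
    case 0
    have eq: "W 0 k = {x \<in> topspace X. d 0 k x < 1 / (real 0 + 1)}" unfolding W_def by auto
    show ?case unfolding eq by (rule coz_lt[OF dc])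
  next
    case (Suc m)
    have "W (Suc m) k = W m k \<inter> {x \<in> topspace X. d (Suc m) k x < 1 / (real (Suc m) + 1)}"
      unfolding W_def by (auto simp: le_Suc_eq)
    then show ?case using coz_Int[OF Suc coz_lt[OF dc]] by metis
  qed
  have Zz: "zero_set X (Z m k)" for m k
  proof (induction m)
    case 0
    have eq: "Z 0 k = {x \<in> topspace X. d 0 k x \<le> 1 / (2 * (real 0 + 1))}" unfolding Z_def by auto
    show ?case unfolding eq by (rule zer_le[OF dc])
  next
    case (Suc m)
    have "Z (Suc m) k = Z m k \<inter> {x \<in> topspace X. d (Suc m) k x \<le> 1 / (2 * (real (Suc m) + 1))}"
      unfolding Z_def by (auto simp: le_Suc_eq)
    then show ?case using zer_Int[OF Suc zer_le[OF dc]] by metis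
  qed
  have ZW: "Z m k \<subseteq> W m k" for m k
  proof
    fix x assume "x \<in> Z m k"
    then have x: "x \<in> topspace X" "\<And>i. i \<le> m \<Longrightarrow> d i k x \<le> 1 / (2 * (real i + 1))"
      unfolding Z_def by auto
    have "d i k x < 1 / (real i + 1)" if "i \<le> m" for i
    proof -
      have "1 / (2 * (real i + 1)) < 1 / (real i + 1)" by (simp add: divide_strict_left_mono)
      then show ?thesis using x(2)[OF that] by linarith
    qed
    then show "x \<in> W m k" unfolding W_def using x(1) by blast
  qed
  have Zfin: "finite {k. x \<notin> Z m k}" if x: "x \<in> topspace X" for m x
  proof -
    have "{k. x \<notin> Z m k} \<subseteq> (\<Union>i\<le>m. {k. 1 / (2 * (real i + 1)) \<le> d i k x})"
      using x unfolding Z_def by (auto simp: not_le intro: less_imp_le)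
    moreover have "finite (\<Union>i\<le>m. {k. 1 / (2 * (real i + 1)) \<le> d i k x})"
      by (intro finite_UN_I finite_atMost dfin[OF x]) simp
    ultimately show ?thesis by (rule finite_subset)
  qed
  define K where "K m = {k. W m k = topspace X}" for m
  show "\<exists>b. (\<forall>n. b n \<in> A n) \<and> range b \<in> Gamma_pt (Cp X) f"
  proof (cases "\<forall>m. infinite (K m)")
    case True
    define kA where "kA m = (SOME k. k \<in> K m)" for m
    have kA: "kA m \<in> K m" for m
      unfolding kA_def using True infinite_imp_nonempty by (metis ex_in_conv someI_ex)
    define b where "b i = g i (kA i)" for i
    have bconv: "\<forall>x\<in>topspace X. ((\<lambda>i. b i x) \<longlongrightarrow> f x) sequentially"
    proof
      fix x assume x: "x \<in> topspace X"
      have "\<bar>b i x - f x\<bar> < 1 / (real i + 1)" for i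
      proof -
        have "x \<in> W i (kA i)" using kA[of i] x unfolding K_def by simp
        then show ?thesis unfolding W_def b_def d_def by simp
      qed
      then show "((\<lambda>i. b i x) \<longlongrightarrow> f x) sequentially" by (intro TL always_eventually) simp
    qed
    have "range b \<in> Gamma_pt (Cp X) f"
      by (rule KL[OF f _ _ bconv]) (use gt gA fA b_def in \<open>simp_all\<close>, metis)
    moreover have "\<forall>n. b n \<in> A n" using gA b_def by simp
    ultimately show ?thesis by blast
  next
    case False
    then obtain n0 where n0: "finite (K n0)" by blast
    have Kmono: "K (n + n0) \<subseteq> K n0" for n
    proof
      fix k assume "k \<in> K (n + n0)"
      then have "W (n + n0) k = topspace X" unfolding K_def by simp
      moreover have "W (n + n0) k \<subseteq> W n0 k" unfolding W_def by auto
      moreover have "W n0 k \<subseteq> topspace X" unfolding W_def by auto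
      ultimately show "k \<in> K n0" unfolding K_def by blast
    qed
    define L where "L n = - K (n + n0)" for n
    have Linf: "infinite (L n)" for n
      unfolding L_def using finite_subset[OF Kmono n0] by (simp add: Compl_eq_Diff_UNIV infinite_UNIV_char_0)
    define \<C> where "\<C> n = W (n + n0) ` L n" for n
    have CF: "\<C> n \<in> Gamma_F X" for n
      unfolding \<C>_def
    proof (rule COV)
      show "\<And>k. cozero_set X (W (n + n0) k)" by (rule Wc)
      show "\<And>k. zero_set X (Z (n + n0) k)" by (rule Zz)
      show "\<And>k. Z (n + n0) k \<subseteq> W (n + n0) k" by (rule ZW)
      show "\<And>x. x \<in> topspace X \<Longrightarrow> finite {k. x \<notin> Z (n + n0) k}" by (rule Zfin)
      show "infinite (L n)" by (rule Linf)
      show "\<And>k. k \<in> L n \<Longrightarrow> W (n + n0) k \<noteq> topspace X" unfolding L_def K_def by simp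
    qed
    have "\<exists>C. (\<forall>n. C n \<in> \<C> n) \<and> range C \<in> Gamma_open X"
      using H[unfolded S1_def, rule_format, of \<C>] CF by blast
    then obtain C where C: "\<And>n. C n \<in> \<C> n" and rC: "range C \<in> Gamma_open X" by blast
    define kk where "kk n = (SOME k. k \<in> L n \<and> C n = W (n + n0) k)" for n
    have kk: "kk n \<in> L n \<and> C n = W (n + n0) (kk n)" for n
    proof -
      have "\<exists>k. k \<in> L n \<and> C n = W (n + n0) k" using C[of n] unfolding \<C>_def by blast
      then show ?thesis unfolding kk_def by (rule someI_ex)
    qed
    have gcC: "gamma_cover X (range C)" using rC by (simp add: Gamma_open_def)
    have Cinf: "infinite (range C)" using gcC by (simp add: gamma_cover_def)
    have Cmiss: "finite {V \<in> range C. x \<notin> V}" if "x \<in> topspace X" for x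
      using gcC that by (simp add: gamma_cover_def)
    define S where "S = {n. \<forall>j<n. C j \<noteq> C n}"
    have rS: "range C \<subseteq> C ` S"
    proof
      fix V assume "V \<in> range C"
      then obtain n where n: "V = C n" by blast
      define j where "j = (LEAST j. C j = V)"
      have j: "C j = V" unfolding j_def by (rule LeastI[of _ n]) (simp add: n)
      have "C j' \<noteq> V" if "j' < j" for j'
        using not_less_Least[OF that[unfolded j_def]] by simp
      then have "j \<in> S" unfolding S_def using j by simp
      then show "V \<in> C ` S" using j by blast
    qed
    have Sinf: "infinite S"
    proof
      assume "finite S"
      then have "finite (C ` S)" by simp
      then show False using Cinf finite_subset[OF rS] by blast
    qed
    have injS: "inj_on C S"
    proof (rule inj_onI)
      fix a b assume ab: "a \<in> S" "b \<in> S" "C a = C b"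
      show "a = b"
      proof (rule ccontr)
        assume "a \<noteq> b"
        then have "a < b \<or> b < a" by arith
        then show False using ab unfolding S_def by auto
      qed
    qed
    have Bfin: "finite {n \<in> S. x \<notin> C n}" if x: "x \<in> topspace X" for x
    proof -
      have "finite (C -` {V \<in> range C. x \<notin> V} \<inter> S)"
        by (rule finite_vimage_IntI[OF Cmiss[OF x] injS])
      moreover have "{n \<in> S. x \<notin> C n} \<subseteq> C -` {V \<in> range C. x \<notin> V} \<inter> S" by blast
      ultimately show ?thesis by (rule finite_subset[rotated])
    qed
    define s where "s i = (LEAST n. n \<in> S \<and> i \<le> n)" for i
    have s: "s i \<in> S \<and> i \<le> s i" for i
    proof -
      obtain n where "n \<in> S" "i \<le> n" using Sinf by (meson infinite_nat_iff_unbounded_le)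
      then show ?thesis unfolding s_def by (metis (mono_tags, lifting) LeastI)
    qed
    define b where "b i = g i (kk (s i))" for i
    have bconv: "\<forall>x\<in>topspace X. ((\<lambda>i. b i x) \<longlongrightarrow> f x) sequentially"
    proof
      fix x assume x: "x \<in> topspace X"
      obtain N where N: "\<And>n. n \<in> {n \<in> S. x \<notin> C n} \<Longrightarrow> n < N"
        using Bfin[OF x] by (meson finite_nat_bounded lessThan_iff subsetD)
      have "\<bar>b i x - f x\<bar> < 1 / (real i + 1)" if i: "i \<ge> N" for i
      proof -
        have "s i \<in> S" "i \<le> s i" using s[of i] by auto
        then have "x \<in> C (s i)" using N[of "s i"] i by fastforce
        then have "x \<in> W (s i + n0) (kk (s i))" using kk[of "s i"] by simp
        moreover have "i \<le> s i + n0" using \<open>i \<le> s i\<close> by simp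
        ultimately show ?thesis unfolding W_def b_def d_def by blast
      qed
      then show "((\<lambda>i. b i x) \<longlongrightarrow> f x) sequentially"
        by (intro TL) (auto simp: eventually_sequentially)
    qed
    have bt: "b i \<in> topspace (Cp X)" and bf: "b i \<noteq> f" and bA: "b i \<in> A i" for i
      using gt gA fA unfolding b_def by (auto, metis)
    have "range b \<in> Gamma_pt (Cp X) f"
      by (rule KL[OF f bt bf bconv])
    then show ?thesis using bA by blast
  qed
qed


theorem mainTheorem9:
  fixes X :: "'a topology"
  assumes "tychonoff_space X"
  shows "(\<forall>f \<in> topspace (Cp X). S1 (Gamma_pt (Cp X) f) (Gamma_pt (Cp X) f))
         \<longleftrightarrow> S1 (Gamma_F X) (Gamma_open X)"
proof
  assume "\<forall>f \<in> topspace (Cp X). S1 (Gamma_pt (Cp X) f) (Gamma_pt (Cp X) f)"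
  then show "S1 (Gamma_F X) (Gamma_open X)" by (rule dir12)
next
  assume H: "S1 (Gamma_F X) (Gamma_open X)"
  show "\<forall>f \<in> topspace (Cp X). S1 (Gamma_pt (Cp X) f) (Gamma_pt (Cp X) f)"
    using dir21[OF H] by blast
qed

end
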